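(* Fix mixture proportions $\pi_1,\ldots,\pi_M\in(0,1)$ with $\sum_i\pi_i=1$ and a kernel $K$ on $\{1,\ldots,M\}$ with $\sum_i\pi_iK(i,i)-\sum_{i,j}\pi_i\pi_jK(i,j)>0$. Let $W$ be a random variable and, for $i=1,\ldots,M$, let $Y_i$ be a random element of a measurable space $\mathcal Z$ defined jointly with $W$, with $Y_i\sim P_i$ (the law of $W$ being the same in each pair). Denote by $\eta(Y_1|W,\ldots,Y_M|W)$ the KMD of the conditional distributions of $Y_1,\ldots,Y_M$ given $W$. Then $$\mathbb E_W\big[\eta(Y_1|W,\ldots,Y_M|W)\big]\ge\eta(P_1,\ldots,P_M).$$
   Context: A kernel on $\{1,\ldots,M\}$ is a symmetric $K$ with $[K(i,j)]$ positive semidefinite. For probability measures $R_1,\dots,R_M$ on $\mathcal Z$: let $(\tilde Z,\tilde\Delta)$ have $\mathbb P(\tilde\Delta=i)=\pi_i$ and $\tilde Z\mid\tilde\Delta=i\sim R_i$; let $(\tilde Z_1,\tilde\Delta_1),(\tilde Z_2,\tilde\Delta_2)$ be i.i.d. copies; let $\tilde\Delta'$ satisfy $(\tilde Z,\tilde\Delta')\overset d=(\tilde Z,\tilde\Delta)$ with $\tilde\Delta,\tilde\Delta'$ conditionally independent given $\tilde Z$. The KMD is $$\eta(R_1,\ldots,R_M)=\frac{\mathbb E[K(\tilde\Delta,\tilde\Delta')]-\mathbb E[K(\tilde\Delta_1,\tilde\Delta_2)]}{\mathbb E[K(\tilde\Delta,\tilde\Delta)]-\mathbb E[K(\tilde\Delta_1,\tilde\Delta_2)]}.$$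 *)

theory Defs
  imports "HOL-Probability.Probability"
begin

definition kernel_on :: "nat \<Rightarrow> (nat \<Rightarrow> nat \<Rightarrow> real) \<Rightarrow> bool" where
  "kernel_on M K \<longleftrightarrow>
     (\<forall>i\<in>{1..M}. \<forall>j\<in>{1..M}. K i j = K j i) \<and>
     (\<forall>c::nat \<Rightarrow> real. 0 \<le> (\<Sum>i\<in>{1..M}. \<Sum>j\<in>{1..M}. c i * c j * K i j))"

text \<open>Law of the mixture variable Z~ : P(Z~ in A) = sum_i pi_i R_i(A).\<close>
definition mixture :: "nat \<Rightarrow> (nat \<Rightarrow> real) \<Rightarrow> 'a measure \<Rightarrow> (nat \<Rightarrow> 'a measure) \<Rightarrow> 'a measure" where
  "mixture M \<pi> Z R = measure_of (space Z) (sets Z)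
     (\<lambda>A. \<Sum>i\<in>{1..M}. ennreal (\<pi> i) * emeasure (R i) A)"

text \<open>Conditional probability P(Delta~ = i | Z~ = z) = pi_i dR_i/dQ (z), Q the mixture law.\<close>
definition cond_label_prob ::
  "nat \<Rightarrow> (nat \<Rightarrow> real) \<Rightarrow> 'a measure \<Rightarrow> (nat \<Rightarrow> 'a measure) \<Rightarrow> nat \<Rightarrow> 'a \<Rightarrow> real" where
  "cond_label_prob M \<pi> Z R i z = \<pi> i * enn2real (RN_deriv (mixture M \<pi> Z R) (R i) z)"

text \<open>E[K(Delta~,Delta~')] where Delta~, Delta~' are conditionally independent given Z~,
  each with conditional law P(Delta~ = . | Z~).\<close>
definition kmd_cross :: "nat \<Rightarrow> (nat \<Rightarrow> real) \<Rightarrow> (nat \<Rightarrow> nat \<Rightarrow> real) \<Rightarrow> 'a measure \<Rightarrow> (nat \<Rightarrow> 'a measure) \<Rightarrow> real" where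
  "kmd_cross M \<pi> K Z R = (\<integral>z. (\<Sum>i\<in>{1..M}. \<Sum>j\<in>{1..M}.
       K i j * cond_label_prob M \<pi> Z R i z * cond_label_prob M \<pi> Z R j z) \<partial>mixture M \<pi> Z R)"

text \<open>E[K(Delta~,Delta~)] and E[K(Delta~_1,Delta~_2)].\<close>
definition kmd_diag :: "nat \<Rightarrow> (nat \<Rightarrow> real) \<Rightarrow> (nat \<Rightarrow> nat \<Rightarrow> real) \<Rightarrow> real" where
  "kmd_diag M \<pi> K = (\<Sum>i\<in>{1..M}. \<pi> i * K i i)"

definition kmd_indep :: "nat \<Rightarrow> (nat \<Rightarrow> real) \<Rightarrow> (nat \<Rightarrow> nat \<Rightarrow> real) \<Rightarrow> real" where
  "kmd_indep M \<pi> K = (\<Sum>i\<in>{1..M}. \<Sum>j\<in>{1..M}. \<pi> i * \<pi> j * K i j)"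

definition kmd :: "nat \<Rightarrow> (nat \<Rightarrow> real) \<Rightarrow> (nat \<Rightarrow> nat \<Rightarrow> real) \<Rightarrow> 'a measure \<Rightarrow> (nat \<Rightarrow> 'a measure) \<Rightarrow> real" where
  "kmd M \<pi> K Z R = (kmd_cross M \<pi> K Z R - kmd_indep M \<pi> K) / (kmd_diag M \<pi> K - kmd_indep M \<pi> K)"

end

theory Submission
  imports Defs
begin

definition qf :: "nat \<Rightarrow> (nat \<Rightarrow> nat \<Rightarrow> real) \<Rightarrow> (nat \<Rightarrow> real) \<Rightarrow> (nat \<Rightarrow> real) \<Rightarrow> real" where
  "qf M K a b = (\<Sum>i\<in>{1..M}. \<Sum>j\<in>{1..M}. K i j * a i * b j)"

definition Gf :: "nat \<Rightarrow> (nat \<Rightarrow> nat \<Rightarrow> real) \<Rightarrow> (nat \<Rightarrow> 'a \<Rightarrow> real) \<Rightarrow> nat \<Rightarrow> 'a \<Rightarrow> real" where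
  "Gf M K c j z = 2 * (\<Sum>i\<in>{1..M}. K i j * c i z) - qf M K (\<lambda>i. c i z) (\<lambda>i. c i z)"

definition Ff :: "nat \<Rightarrow> (nat \<Rightarrow> real) \<Rightarrow> (nat \<Rightarrow> nat \<Rightarrow> real) \<Rightarrow> (nat \<Rightarrow> 'a \<Rightarrow> real) \<Rightarrow> (nat \<Rightarrow> 'a measure) \<Rightarrow> real" where
  "Ff M \<pi> K c R = (\<Sum>j\<in>{1..M}. \<pi> j * (\<integral>z. Gf M K c j z \<partial>R j))"

definition KC :: "nat \<Rightarrow> (nat \<Rightarrow> nat \<Rightarrow> real) \<Rightarrow> real" where
  "KC M K = (\<Sum>i\<in>{1..M}. \<Sum>j\<in>{1..M}. \<bar>K i j\<bar>)"

lemma qf_bound: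
  assumes "\<And>i. i \<in> {1..M} \<Longrightarrow> \<bar>a i\<bar> \<le> 1" "\<And>i. i \<in> {1..M} \<Longrightarrow> \<bar>b i\<bar> \<le> 1"
  shows "\<bar>qf M K a b\<bar> \<le> KC M K"
proof -
  have "\<bar>qf M K a b\<bar> \<le> (\<Sum>i\<in>{1..M}. \<bar>\<Sum>j\<in>{1..M}. K i j * a i * b j\<bar>)"
    unfolding qf_def by (rule sum_abs)
  also have "\<dots> \<le> (\<Sum>i\<in>{1..M}. \<Sum>j\<in>{1..M}. \<bar>K i j * a i * b j\<bar>)"
    by (intro sum_mono sum_abs)
  also have "\<dots> \<le> (\<Sum>i\<in>{1..M}. \<Sum>j\<in>{1..M}. \<bar>K i j\<bar>)"
  proof (intro sum_mono)
    fix i j assume i: "i \<in> {1..M}" and j: "j \<in> {1..M}"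
    have "\<bar>a i * b j\<bar> \<le> 1" using assms[OF i] assms[OF j] by (simp add: abs_mult mult_le_one)
    then have "\<bar>K i j\<bar> * \<bar>a i * b j\<bar> \<le> \<bar>K i j\<bar> * 1" by (intro mult_left_mono) auto
    then show "\<bar>K i j * a i * b j\<bar> \<le> \<bar>K i j\<bar>" by (simp add: abs_mult mult.assoc)
  qed
  finally show ?thesis unfolding KC_def .
qed

lemma lin_bound:
  assumes "\<And>i. i \<in> {1..M} \<Longrightarrow> \<bar>a i\<bar> \<le> 1" "j \<in> {1..M}"
  shows "\<bar>\<Sum>i\<in>{1..M}. K i j * a i\<bar> \<le> KC M K"
proof -
  have "\<bar>\<Sum>i\<in>{1..M}. K i j * a i\<bar> \<le> (\<Sum>i\<in>{1..M}. \<bar>K i j * a i\<bar>)" by (rule sum_abs)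
  also have "\<dots> \<le> (\<Sum>i\<in>{1..M}. \<bar>K i j\<bar>)"
  proof (intro sum_mono)
    fix i assume i: "i \<in> {1..M}"
    have "\<bar>K i j\<bar> * \<bar>a i\<bar> \<le> \<bar>K i j\<bar> * 1" using assms(1)[OF i] by (intro mult_left_mono) auto
    then show "\<bar>K i j * a i\<bar> \<le> \<bar>K i j\<bar>" by (simp add: abs_mult)
  qed
  also have "\<dots> = (\<Sum>j'\<in>{1..M}. \<Sum>i\<in>{1..M}. \<bar>K i j'\<bar>) - (\<Sum>j'\<in>{1..M}-{j}. \<Sum>i\<in>{1..M}. \<bar>K i j'\<bar>)"
    using assms(2) by (simp add: sum_diff1)
  also have "\<dots> \<le> (\<Sum>j'\<in>{1..M}. \<Sum>i\<in>{1..M}. \<bar>K i j'\<bar>)"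
    by (simp add: sum_nonneg)
  also have "\<dots> = KC M K" unfolding KC_def by (rule sum.swap)
  finally show ?thesis .
qed

lemma Gf_bound:
  assumes "\<And>i. i \<in> {1..M} \<Longrightarrow> \<bar>c i z\<bar> \<le> 1" "j \<in> {1..M}"
  shows "\<bar>Gf M K c j z\<bar> \<le> 3 * KC M K"
proof -
  have 1: "\<bar>\<Sum>i\<in>{1..M}. K i j * c i z\<bar> \<le> KC M K" using assms by (intro lin_bound) auto
  have 2: "\<bar>qf M K (\<lambda>i. c i z) (\<lambda>i. c i z)\<bar> \<le> KC M K" using assms by (intro qf_bound) auto
  show ?thesis unfolding Gf_def using 1 2 by linarith
qed

lemma qf_sym:
  assumes "kernel_on M K"
  shows "qf M K a b = qf M K b a"
proof -
  have "qf M K a b = (\<Sum>j\<in>{1..M}. \<Sum>i\<in>{1..M}. K i j * a i * b j)"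
    unfolding qf_def by (rule sum.swap)
  also have "\<dots> = qf M K b a"
    unfolding qf_def using assms unfolding kernel_on_def
    by (intro sum.cong refl) (auto simp: mult_ac)
  finally show ?thesis .
qed

lemma qf_psd:
  assumes "kernel_on M K"
  shows "0 \<le> qf M K a a"
proof -
  have "0 \<le> (\<Sum>i\<in>{1..M}. \<Sum>j\<in>{1..M}. a i * a j * K i j)"
    using assms unfolding kernel_on_def by blast
  also have "\<dots> = qf M K a a" unfolding qf_def by (simp add: mult_ac)
  finally show ?thesis .
qed

lemma qf_diff:
  "qf M K (\<lambda>i. a i - b i) (\<lambda>i. a i - b i) = qf M K a a - qf M K a b - qf M K b a + qf M K b b"
  unfolding qf_def by (simp add: algebra_simps sum_subtractf sum.distrib)

lemma qf_ineq:
  assumes "kernel_on M K"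
  shows "2 * qf M K c a - qf M K c c \<le> qf M K a a"
  using qf_psd[OF assms, of "\<lambda>i. a i - c i"] qf_diff[of M K a c] qf_sym[OF assms, of a c] by linarith

lemma Gsum: "(\<Sum>j\<in>{1..M}. b j * (2 * (\<Sum>i\<in>{1..M}. K i j * a i) - q))
   = 2 * qf M K a b - (\<Sum>j\<in>{1..M}. b j) * q"
proof -
  have "(\<Sum>j\<in>{1..M}. b j * (2 * (\<Sum>i\<in>{1..M}. K i j * a i) - q))
     = 2 * (\<Sum>j\<in>{1..M}. \<Sum>i\<in>{1..M}. K i j * a i * b j) - (\<Sum>j\<in>{1..M}. b j) * q"
    by (simp add: sum_distrib_left sum_distrib_right right_diff_distrib sum_subtractf mult_ac)
  also have "(\<Sum>j\<in>{1..M}. \<Sum>i\<in>{1..M}. K i j * a i * b j) = qf M K a b"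
    unfolding qf_def by (rule sum.swap)
  finally show ?thesis .
qed

lemma qf_cong:
  assumes "\<And>i. i \<in> {1..M} \<Longrightarrow> a i = a' i" "\<And>i. i \<in> {1..M} \<Longrightarrow> b i = b' i"
  shows "qf M K a b = qf M K a' b'"
  unfolding qf_def using assms by (intro sum.cong refl) auto

locale mixsetup =
  fixes M :: nat and \<pi> :: "nat \<Rightarrow> real" and Z :: "'a measure" and R :: "nat \<Rightarrow> 'a measure"
  assumes pi_pos: "\<And>i. i \<in> {1..M} \<Longrightarrow> 0 < \<pi> i"
    and pi_sum: "(\<Sum>i\<in>{1..M}. \<pi> i) = 1"
    and R_prob: "\<And>i. i \<in> {1..M} \<Longrightarrow> prob_space (R i)"
    and R_sets: "\<And>i. i \<in> {1..M} \<Longrightarrow> sets (R i) = sets Z"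
begin

abbreviation "Q \<equiv> mixture M \<pi> Z R"

lemma Q_sets[simp]: "sets Q = sets Z"
  unfolding mixture_def by (simp add: sets.space_closed)

lemma Q_space[simp]: "space Q = space Z"
  using Q_sets sets_eq_imp_space_eq by blast

lemma Q_emeasure:
  assumes A: "A \<in> sets Z"
  shows "emeasure Q A = (\<Sum>i\<in>{1..M}. ennreal (\<pi> i) * emeasure (R i) A)"
  unfolding mixture_def
proof (rule emeasure_measure_of_sigma[OF _ _ _ A])
  show "sigma_algebra (space Z) (sets Z)" by (rule sets.sigma_algebra_axioms)
  show "positive (sets Z) (\<lambda>A. \<Sum>i\<in>{1..M}. ennreal (\<pi> i) * emeasure (R i) A)"
    unfolding positive_def by simp
  show "countably_additive (sets Z) (\<lambda>A. \<Sum>i\<in>{1..M}. ennreal (\<pi> i) * emeasure (R i) A)"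
    unfolding countably_additive_def
  proof (intro allI impI)
    fix F :: "nat \<Rightarrow> 'a set"
    assume F: "range F \<subseteq> sets Z" "disjoint_family F" "\<Union> (range F) \<in> sets Z"
    have "(\<Sum>n. \<Sum>i\<in>{1..M}. ennreal (\<pi> i) * emeasure (R i) (F n))
        = (\<Sum>i\<in>{1..M}. \<Sum>n. ennreal (\<pi> i) * emeasure (R i) (F n))"
      by (rule suminf_sum) (rule summableI)
    also have "\<dots> = (\<Sum>i\<in>{1..M}. ennreal (\<pi> i) * emeasure (R i) (\<Union> (range F)))"
    proof (rule sum.cong[OF refl])
      fix i assume i: "i \<in> {1..M}"
      have "(\<Sum>n. emeasure (R i) (F n)) = emeasure (R i) (\<Union> (range F))"
        using F R_sets[OF i] by (intro suminf_emeasure) auto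
      then show "(\<Sum>n. ennreal (\<pi> i) * emeasure (R i) (F n)) = ennreal (\<pi> i) * emeasure (R i) (\<Union> (range F))"
        by simp
    qed
    finally show "(\<Sum>n. \<Sum>i\<in>{1..M}. ennreal (\<pi> i) * emeasure (R i) (F n))
        = (\<Sum>i\<in>{1..M}. ennreal (\<pi> i) * emeasure (R i) (\<Union> (range F)))" .
  qed
qed

lemma Q_prob: "prob_space Q"
proof (rule prob_spaceI)
  have "emeasure Q (space Q) = (\<Sum>i\<in>{1..M}. ennreal (\<pi> i) * emeasure (R i) (space Z))"
    by (simp add: Q_emeasure)
  also have "\<dots> = (\<Sum>i\<in>{1..M}. ennreal (\<pi> i))"
  proof (rule sum.cong[OF refl])
    fix i assume i: "i \<in> {1..M}"
    interpret prob_space "R i" using R_prob[OF i] .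
    have "space (R i) = space Z" using R_sets[OF i] sets_eq_imp_space_eq by blast
    then show "ennreal (\<pi> i) * emeasure (R i) (space Z) = ennreal (\<pi> i)"
      using emeasure_space_1 by simp
  qed
  also have "\<dots> = ennreal (\<Sum>i\<in>{1..M}. \<pi> i)"
    using pi_pos by (intro sum_ennreal) (auto intro: less_imp_le)
  finally show "emeasure Q (space Q) = 1" using pi_sum by simp
qed

sublocale Qp: prob_space Q by (rule Q_prob)

lemma R_ac: assumes i: "i \<in> {1..M}" shows "absolutely_continuous Q (R i)"
  unfolding absolutely_continuous_def
proof
  fix A assume A: "A \<in> null_sets Q"
  then have As: "A \<in> sets Z" and "emeasure Q A = 0" by auto
  then have "(\<Sum>j\<in>{1..M}. ennreal (\<pi> j) * emeasure (R j) A) = 0" by (simp add: Q_emeasure)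
  then have "ennreal (\<pi> i) * emeasure (R i) A = 0" using i by (subst (asm) sum_eq_0_iff) auto
  then have "emeasure (R i) A = 0" using pi_pos[OF i] by auto
  then show "A \<in> null_sets (R i)" using As R_sets[OF i] by auto
qed

lemma R_dens: assumes i: "i \<in> {1..M}" shows "density Q (RN_deriv Q (R i)) = R i"
  using R_ac[OF i] R_sets[OF i] by (intro Qp.density_RN_deriv) auto

abbreviation "p i z \<equiv> cond_label_prob M \<pi> Z R i z"

lemma p_meas[measurable]: "(\<lambda>z. p i z) \<in> borel_measurable Z"
proof -
  have "(\<lambda>z. p i z) \<in> borel_measurable Q"
    unfolding cond_label_prob_def by measurable
  then show ?thesis by (simp cong: measurable_cong_sets)
qed

lemma sum_RN_one: "AE z in Q. (\<Sum>i\<in>{1..M}. ennreal (\<pi> i) * RN_deriv Q (R i) z) = 1"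
proof -
  have "density Q (\<lambda>z. \<Sum>i\<in>{1..M}. ennreal (\<pi> i) * RN_deriv Q (R i) z) = density Q (\<lambda>_. 1)"
  proof (rule measure_eqI)
    show "sets (density Q (\<lambda>z. \<Sum>i\<in>{1..M}. ennreal (\<pi> i) * RN_deriv Q (R i) z)) = sets (density Q (\<lambda>_. 1))"
      by simp
  next
    fix A assume "A \<in> sets (density Q (\<lambda>z. \<Sum>i\<in>{1..M}. ennreal (\<pi> i) * RN_deriv Q (R i) z))"
    then have A[measurable]: "A \<in> sets Q" by simp
    have "emeasure (density Q (\<lambda>z. \<Sum>i\<in>{1..M}. ennreal (\<pi> i) * RN_deriv Q (R i) z)) A
        = (\<integral>\<^sup>+z. (\<Sum>i\<in>{1..M}. ennreal (\<pi> i) * RN_deriv Q (R i) z) * indicator A z \<partial>Q)"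
      using A by (intro emeasure_density) auto
    also have "\<dots> = (\<integral>\<^sup>+z. (\<Sum>i\<in>{1..M}. ennreal (\<pi> i) * (RN_deriv Q (R i) z * indicator A z)) \<partial>Q)"
      by (simp add: sum_distrib_right mult.assoc)
    also have "\<dots> = (\<Sum>i\<in>{1..M}. \<integral>\<^sup>+z. ennreal (\<pi> i) * (RN_deriv Q (R i) z * indicator A z) \<partial>Q)"
      using A by (intro nn_integral_sum) measurable
    also have "\<dots> = (\<Sum>i\<in>{1..M}. ennreal (\<pi> i) * emeasure (R i) A)"
    proof (rule sum.cong[OF refl])
      fix i assume i: "i \<in> {1..M}"
      have "emeasure (R i) A = emeasure (density Q (RN_deriv Q (R i))) A" using R_dens[OF i] by simp
      also have "\<dots> = (\<integral>\<^sup>+z. RN_deriv Q (R i) z * indicator A z \<partial>Q)"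
        using A by (intro emeasure_density) auto
      moreover have "(\<lambda>z. RN_deriv Q (R i) z * indicator A z) \<in> borel_measurable Q"
        using A by measurable
      ultimately show "(\<integral>\<^sup>+z. ennreal (\<pi> i) * (RN_deriv Q (R i) z * indicator A z) \<partial>Q) = ennreal (\<pi> i) * emeasure (R i) A"
        by (subst nn_integral_cmult) auto
    qed
    also have "\<dots> = emeasure Q A" using A by (simp add: Q_emeasure)
    also have "\<dots> = emeasure (density Q (\<lambda>_. 1)) A" by (simp add: density_1)
    finally show "emeasure (density Q (\<lambda>z. \<Sum>i\<in>{1..M}. ennreal (\<pi> i) * RN_deriv Q (R i) z)) A = emeasure (density Q (\<lambda>_. 1)) A" .
  qed
  then show ?thesis by (subst (asm) Qp.density_unique_iff) auto
qed

lemma p_bounds: "AE z in Q. (\<forall>i\<in>{1..M}. 0 \<le> p i z \<and> p i z \<le> 1) \<and> (\<Sum>i\<in>{1..M}. p i z) = 1"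
  using sum_RN_one
proof eventually_elim
  case (elim z)
  let ?t = "\<lambda>i. ennreal (\<pi> i) * RN_deriv Q (R i) z"
  have le: "?t i \<le> 1" if i: "i \<in> {1..M}" for i
    using elim member_le_sum[of i "{1..M}" ?t] i by auto
  have eq: "p i z = enn2real (?t i)" if i: "i \<in> {1..M}" for i
    using pi_pos[OF i] by (simp add: cond_label_prob_def enn2real_mult)
  have fin: "?t i \<noteq> top" if i: "i \<in> {1..M}" for i
    using le[OF i] by (auto simp: top_unique)
  have "(\<Sum>i\<in>{1..M}. p i z) = (\<Sum>i\<in>{1..M}. enn2real (?t i))" using eq by simp
  also have "\<dots> = enn2real (\<Sum>i\<in>{1..M}. ?t i)" using fin by (subst enn2real_sum) (auto simp: less_top)
  also have "\<dots> = 1" using elim by simp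
  finally have s: "(\<Sum>i\<in>{1..M}. p i z) = 1" .
  have "0 \<le> p i z \<and> p i z \<le> 1" if i: "i \<in> {1..M}" for i
    using eq[OF i] le[OF i] by (auto simp: enn2real_leI)
  with s show ?case by blast
qed

lemma int_R:
  assumes i: "i \<in> {1..M}" and h[measurable]: "h \<in> borel_measurable Z"
    and hb: "\<And>z. z \<in> space Z \<Longrightarrow> \<bar>h z\<bar> \<le> B"
  shows "integrable Q (\<lambda>z. p i z * h z)" "\<pi> i * (\<integral>z. h z \<partial>R i) = (\<integral>z. p i z * h z \<partial>Q)"
proof -
  interpret Ri: prob_space "R i" using R_prob[OF i] .
  have sf: "sigma_finite_measure (R i)" by unfold_locales
  have Rs: "sets (R i) = sets Q" using R_sets[OF i] by simp
  have hQ: "h \<in> borel_measurable Q" by (simp cong: measurable_cong_sets)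
  have sp: "space (R i) = space Z" using R_sets[OF i] sets_eq_imp_space_eq by blast
  have "integrable (R i) h"
    using hb sp by (intro Ri.integrable_const_bound[where B=B]) (auto simp: measurable_cong_sets[OF R_sets[OF i] refl])
  then have "integrable Q (\<lambda>z. enn2real (RN_deriv Q (R i) z) * h z)"
    using Qp.RN_deriv_integrable[OF sf R_ac[OF i] Rs hQ] by simp
  then have "integrable Q (\<lambda>z. \<pi> i * (enn2real (RN_deriv Q (R i) z) * h z))" by simp
  then show "integrable Q (\<lambda>z. p i z * h z)" by (simp add: cond_label_prob_def mult.assoc)
  have "\<pi> i * (\<integral>z. h z \<partial>R i) = \<pi> i * (\<integral>z. enn2real (RN_deriv Q (R i) z) * h z \<partial>Q)"
    using Qp.RN_deriv_integral[OF sf R_ac[OF i] Rs hQ] by simp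
  also have "\<dots> = (\<integral>z. \<pi> i * (enn2real (RN_deriv Q (R i) z) * h z) \<partial>Q)" by simp
  finally show "\<pi> i * (\<integral>z. h z \<partial>R i) = (\<integral>z. p i z * h z \<partial>Q)"
    by (simp add: cond_label_prob_def mult.assoc)
qed

lemma Gf_meas:
  assumes c: "\<And>i. i \<in> {1..M} \<Longrightarrow> c i \<in> borel_measurable Z"
  shows "Gf M K c j \<in> borel_measurable Z"
proof -
  have "(\<lambda>z. Gf M K c j z) \<in> borel_measurable Z"
    unfolding Gf_def qf_def
    by (intro borel_measurable_diff borel_measurable_sum borel_measurable_times borel_measurable_const c) auto
  then show ?thesis by simp
qed

lemma F_repr:
  assumes c: "\<And>i. i \<in> {1..M} \<Longrightarrow> c i \<in> borel_measurable Z"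
    and cb: "\<And>i z. i \<in> {1..M} \<Longrightarrow> z \<in> space Z \<Longrightarrow> \<bar>c i z\<bar> \<le> 1"
  shows "integrable Q (\<lambda>z. \<Sum>j\<in>{1..M}. p j z * Gf M K c j z)"
    "Ff M \<pi> K c R = (\<integral>z. (\<Sum>j\<in>{1..M}. p j z * Gf M K c j z) \<partial>Q)"
proof -
  have ib: "\<And>j z. j \<in> {1..M} \<Longrightarrow> z \<in> space Z \<Longrightarrow> \<bar>Gf M K c j z\<bar> \<le> 3 * KC M K"
    using cb by (intro Gf_bound) auto
  note ir = int_R[OF _ Gf_meas[OF c] ib]
  have irI: "\<And>j. j \<in> {1..M} \<Longrightarrow> integrable Q (\<lambda>z. p j z * Gf M K c j z)"
    by (rule ir(1)) auto
  show "integrable Q (\<lambda>z. \<Sum>j\<in>{1..M}. p j z * Gf M K c j z)"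
    by (rule Bochner_Integration.integrable_sum, rule irI)
  have "Ff M \<pi> K c R = (\<Sum>j\<in>{1..M}. (\<integral>z. p j z * Gf M K c j z \<partial>Q))"
    unfolding Ff_def using ir(2) by (intro sum.cong refl) auto
  also have "\<dots> = (\<integral>z. (\<Sum>j\<in>{1..M}. p j z * Gf M K c j z) \<partial>Q)"
    by (rule Bochner_Integration.integral_sum[symmetric], rule irI)
  finally show "Ff M \<pi> K c R = (\<integral>z. (\<Sum>j\<in>{1..M}. p j z * Gf M K c j z) \<partial>Q)" .
qed

lemma cross_repr: "kmd_cross M \<pi> K Z R = (\<integral>z. qf M K (\<lambda>i. p i z) (\<lambda>i. p i z) \<partial>Q)"
  unfolding kmd_cross_def qf_def ..

lemma qpp_meas: "(\<lambda>z. qf M K (\<lambda>i. p i z) (\<lambda>i. p i z)) \<in> borel_measurable Q"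
  unfolding qf_def by (simp cong: measurable_cong_sets)

lemma qpp_int: "integrable Q (\<lambda>z. qf M K (\<lambda>i. p i z) (\<lambda>i. p i z))"
proof (rule Qp.integrable_const_bound[where B="KC M K"])
  show "AE z in Q. norm (qf M K (\<lambda>i. p i z) (\<lambda>i. p i z)) \<le> KC M K"
    using p_bounds by eventually_elim (intro qf_bound[simplified real_norm_def[symmetric]], auto)
qed (rule qpp_meas)

lemma Gsum_p:
  assumes "(\<Sum>j\<in>{1..M}. p j z) = 1"
  shows "(\<Sum>j\<in>{1..M}. p j z * Gf M K c j z) = 2 * qf M K (\<lambda>i. c i z) (\<lambda>i. p i z) - qf M K (\<lambda>i. c i z) (\<lambda>i. c i z)"
  unfolding Gf_def using Gsum[where b="\<lambda>j. p j z" and K=K and a="\<lambda>i. c i z" and q="qf M K (\<lambda>i. c i z) (\<lambda>i. c i z)" and M=M] assms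
  by simp

lemma F_le:
  assumes kern: "kernel_on M K"
    and c: "\<And>i. i \<in> {1..M} \<Longrightarrow> c i \<in> borel_measurable Z"
    and cb: "\<And>i z. i \<in> {1..M} \<Longrightarrow> z \<in> space Z \<Longrightarrow> \<bar>c i z\<bar> \<le> 1"
  shows "Ff M \<pi> K c R \<le> kmd_cross M \<pi> K Z R"
proof -
  have e1: "Ff M \<pi> K c R = (\<integral>z. (\<Sum>j\<in>{1..M}. p j z * Gf M K c j z) \<partial>Q)"
    by (rule F_repr(2)[OF c cb])
  show ?thesis unfolding e1 cross_repr
proof (rule integral_mono_AE[OF F_repr(1)[OF c cb] qpp_int])
  show "AE z in Q. (\<Sum>j\<in>{1..M}. p j z * Gf M K c j z) \<le> qf M K (\<lambda>i. p i z) (\<lambda>i. p i z)"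
    using p_bounds
  proof eventually_elim
    case (elim z)
    then show ?case using Gsum_p[where z=z and c=c] qf_ineq[OF kern, of "\<lambda>i. c i z" "\<lambda>i. p i z"] by simp
  qed
qed
qed

definition "cp i z = max 0 (min 1 (p i z))"

lemma cp_meas: "cp i \<in> borel_measurable Z"
  unfolding cp_def by measurable

lemma cp_bound: "\<bar>cp i z\<bar> \<le> 1"
  unfolding cp_def by auto

lemma F_eq: "Ff M \<pi> K cp R = kmd_cross M \<pi> K Z R"
  unfolding F_repr(2)[OF cp_meas cp_bound] cross_repr
proof (rule integral_cong_AE)
  show "(\<lambda>z. \<Sum>j\<in>{1..M}. p j z * Gf M K cp j z) \<in> borel_measurable Q"
    using F_repr(1)[OF cp_meas cp_bound] by auto
  show "(\<lambda>z. qf M K (\<lambda>i. p i z) (\<lambda>i. p i z)) \<in> borel_measurable Q" by (rule qpp_meas)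
  show "AE z in Q. (\<Sum>j\<in>{1..M}. p j z * Gf M K cp j z) = qf M K (\<lambda>i. p i z) (\<lambda>i. p i z)"
    using p_bounds
  proof eventually_elim
    case (elim z)
    then have eq: "\<And>i. i \<in> {1..M} \<Longrightarrow> cp i z = p i z" unfolding cp_def by auto
    have "qf M K (\<lambda>i. cp i z) (\<lambda>i. p i z) = qf M K (\<lambda>i. p i z) (\<lambda>i. p i z)"
      using eq by (intro qf_cong) auto
    moreover have "qf M K (\<lambda>i. cp i z) (\<lambda>i. cp i z) = qf M K (\<lambda>i. p i z) (\<lambda>i. p i z)"
      using eq by (intro qf_cong) auto
    ultimately show ?case using Gsum_p[where z=z and c=cp] elim by simp
  qed
qed

lemma cross_bounds:
  assumes kern: "kernel_on M K"
  shows "0 \<le> kmd_cross M \<pi> K Z R" "kmd_cross M \<pi> K Z R \<le> KC M K"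
proof -
  show "0 \<le> kmd_cross M \<pi> K Z R"
    unfolding cross_repr by (intro integral_nonneg_AE AE_I2 qf_psd[OF kern])
  have "kmd_cross M \<pi> K Z R \<le> (\<integral>z. KC M K \<partial>Q)"
    unfolding cross_repr
  proof (rule integral_mono_AE[OF qpp_int])
    show "AE z in Q. qf M K (\<lambda>i. p i z) (\<lambda>i. p i z) \<le> KC M K"
      using p_bounds
    proof eventually_elim
      case (elim z)
      then have "\<bar>qf M K (\<lambda>i. p i z) (\<lambda>i. p i z)\<bar> \<le> KC M K" by (intro qf_bound) auto
      then show ?case by simp
    qed
  qed simp
  then show "kmd_cross M \<pi> K Z R \<le> KC M K" using Qp.prob_space by simp
qed

end

lemma bounded_int_bound:
  fixes f :: "'a \<Rightarrow> real"
  assumes "prob_space L" "f \<in> borel_measurable L" "\<And>z. z \<in> space L \<Longrightarrow> \<bar>f z\<bar> \<le> B"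
  shows "\<bar>\<integral>z. f z \<partial>L\<bar> \<le> B"
proof -
  interpret prob_space L by fact
  have i: "integrable L f" using assms by (intro integrable_const_bound[where B=B]) auto
  have ab: "-B \<le> f z \<and> f z \<le> B" if "z \<in> space L" for z using assms(3)[OF that] by linarith
  have "(\<integral>z. f z \<partial>L) \<le> B" using ab by (intro integral_le_const i AE_I2) auto
  moreover have "-B \<le> (\<integral>z. f z \<partial>L)" using ab by (intro integral_ge_const i AE_I2) auto
  ultimately show ?thesis by auto
qed

theorem corollary1:
  fixes M :: nat and \<pi> :: "nat \<Rightarrow> real" and K :: "nat \<Rightarrow> nat \<Rightarrow> real"
    and Z :: "'a measure" and N :: "'b measure" and \<Omega> :: "'c measure"
    and W :: "'c \<Rightarrow> 'b" and Y :: "nat \<Rightarrow> 'c \<Rightarrow> 'a" and \<kappa> :: "nat \<Rightarrow> 'b \<Rightarrow> 'a measure"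
  assumes pi_range: "\<forall>i\<in>{1..M}. 0 < \<pi> i \<and> \<pi> i < 1"
    and pi_sum: "(\<Sum>i\<in>{1..M}. \<pi> i) = 1"
    and kernel: "kernel_on M K"
    and nondeg: "kmd_diag M \<pi> K - kmd_indep M \<pi> K > 0"
    and prob: "prob_space \<Omega>"
    and W_meas: "W \<in> measurable \<Omega> N"
    and Y_meas: "\<forall>i\<in>{1..M}. Y i \<in> measurable \<Omega> Z"
    and \<kappa>_kernel: "\<forall>i\<in>{1..M}. \<kappa> i \<in> measurable N (prob_algebra Z)"
    and \<kappa>_cond: "\<forall>i\<in>{1..M}. \<forall>A\<in>sets N. \<forall>B\<in>sets Z.
        measure \<Omega> {\<omega>\<in>space \<Omega>. W \<omega> \<in> A \<and> Y i \<omega> \<in> B}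
          = (\<integral>w. indicator A w * measure (\<kappa> i w) B \<partial>distr \<Omega> N W)"
    and eta_meas: "(\<lambda>w. kmd M \<pi> K Z (\<lambda>i. \<kappa> i w)) \<in> borel_measurable N"
  shows "(\<integral>w. kmd M \<pi> K Z (\<lambda>i. \<kappa> i w) \<partial>distr \<Omega> N W)
           \<ge> kmd M \<pi> K Z (\<lambda>i. distr \<Omega> Z (Y i))"
proof -
  interpret O: prob_space \<Omega> by (rule prob)
  define PW where "PW = distr \<Omega> N W"
  define P where "P = (\<lambda>i. distr \<Omega> Z (Y i))"
  have PWp: "prob_space PW" unfolding PW_def by (rule O.prob_space_distr[OF W_meas])
  interpret PWp: prob_space PW by (rule PWp)
  have PW_sets[simp]: "sets PW = sets N" unfolding PW_def by simp
  have PW_space[simp]: "space PW = space N" unfolding PW_def by simp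
  have pi_pos: "\<And>i. i \<in> {1..M} \<Longrightarrow> 0 < \<pi> i" using pi_range by auto
  have kap_sub: "\<And>i. i \<in> {1..M} \<Longrightarrow> \<kappa> i \<in> measurable PW (subprob_algebra Z)"
  proof -
    fix i assume i: "i \<in> {1..M}"
    have "\<kappa> i \<in> measurable N (subprob_algebra Z)"
      by (rule measurable_prob_algebraD) (use \<kappa>_kernel i in blast)
    then show "\<kappa> i \<in> measurable PW (subprob_algebra Z)"
      by (subst measurable_cong_sets[OF PW_sets refl])
  qed
  have kap_w: "prob_space (\<kappa> i w) \<and> sets (\<kappa> i w) = sets Z" if i: "i \<in> {1..M}" and w: "w \<in> space N" for i w
  proof -
    have "\<kappa> i w \<in> space (prob_algebra Z)"
      by (rule measurable_space[OF _ w]) (use \<kappa>_kernel i in blast)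
    then show ?thesis by (simp add: space_prob_algebra)
  qed
  interpret PP: mixsetup M \<pi> Z P
  proof (rule mixsetup.intro)
    show "\<And>i. i \<in> {1..M} \<Longrightarrow> 0 < \<pi> i" by (rule pi_pos)
    show "(\<Sum>i\<in>{1..M}. \<pi> i) = 1" by (rule pi_sum)
    fix i assume i: "i \<in> {1..M}"
    then have Yi: "Y i \<in> measurable \<Omega> Z" using Y_meas by blast
    show "prob_space (P i)" unfolding P_def by (rule O.prob_space_distr[OF Yi])
    show "sets (P i) = sets Z" unfolding P_def by simp
  qed
  have mixw: "mixsetup M \<pi> Z (\<lambda>i. \<kappa> i w)" if "w \<in> space N" for w
  proof (rule mixsetup.intro)
    show "\<And>i. i \<in> {1..M} \<Longrightarrow> 0 < \<pi> i" by (rule pi_pos)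
    show "(\<Sum>i\<in>{1..M}. \<pi> i) = 1" by (rule pi_sum)
    fix i assume i: "i \<in> {1..M}"
    show "prob_space (\<kappa> i w)" using kap_w[OF i that] by blast
    show "sets (\<kappa> i w) = sets Z" using kap_w[OF i that] by blast
  qed
  define c where "c = PP.cp"
  have c_meas: "\<And>i. c i \<in> borel_measurable Z" unfolding c_def by (rule PP.cp_meas)
  have c_b: "\<And>i z. \<bar>c i z\<bar> \<le> 1" unfolding c_def by (rule PP.cp_bound)
  define ind where "ind = kmd_indep M \<pi> K"
  define D where "D = kmd_diag M \<pi> K - ind"
  have Dpos: "0 < D" using nondeg D_def ind_def by simp
  have bind_eq: "P j = PW \<bind> \<kappa> j" if j: "j \<in> {1..M}" for j
  proof (rule measure_eqI)
    have PWa: "PW \<in> space (prob_algebra N)" using PWp by (simp add: space_prob_algebra)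
    have kj: "\<kappa> j \<in> N \<rightarrow>\<^sub>M prob_algebra Z" using \<kappa>_kernel j by auto
    show "sets (P j) = sets (PW \<bind> \<kappa> j)" unfolding P_def using sets_bind'[OF PWa kj] by simp
    fix B assume "B \<in> sets (P j)"
    then have B[measurable]: "B \<in> sets Z" unfolding P_def by simp
    have Yj: "Y j \<in> measurable \<Omega> Z" using Y_meas j by auto
    have "emeasure (P j) B = emeasure \<Omega> (Y j -` B \<inter> space \<Omega>)"
      unfolding P_def using Yj by (simp add: emeasure_distr)
    also have "\<dots> = ennreal (measure \<Omega> {\<omega>\<in>space \<Omega>. W \<omega> \<in> space N \<and> Y j \<omega> \<in> B})"
    proof -
      have "Y j -` B \<inter> space \<Omega> = {\<omega>\<in>space \<Omega>. W \<omega> \<in> space N \<and> Y j \<omega> \<in> B}"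
        using measurable_space[OF W_meas] by auto
      then show ?thesis by (simp add: O.emeasure_eq_measure)
    qed
    also have "\<dots> = ennreal (\<integral>w. measure (\<kappa> j w) B \<partial>PW)"
    proof -
      have "measure \<Omega> {\<omega>\<in>space \<Omega>. W \<omega> \<in> space N \<and> Y j \<omega> \<in> B}
          = (\<integral>w. indicator (space N) w * measure (\<kappa> j w) B \<partial>PW)"
        using \<kappa>_cond j B unfolding PW_def[symmetric] by blast
      also have "\<dots> = (\<integral>w. measure (\<kappa> j w) B \<partial>PW)"
        by (rule Bochner_Integration.integral_cong) (auto simp: indicator_def)
      finally show ?thesis by simp
    qed
    also have "\<dots> = (\<integral>\<^sup>+w. ennreal (measure (\<kappa> j w) B) \<partial>PW)"
    proof (rule nn_integral_eq_integral[symmetric])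
      have m: "(\<lambda>w. measure (\<kappa> j w) B) \<in> borel_measurable PW"
        using kap_sub[OF j] by measurable
      show "integrable PW (\<lambda>w. measure (\<kappa> j w) B)"
      proof (rule PWp.integrable_const_bound[where B=1])
        show "AE w in PW. norm (measure (\<kappa> j w) B) \<le> 1"
        proof (rule AE_I2)
          fix w assume "w \<in> space PW"
          then have "prob_space (\<kappa> j w)" using kap_w[OF j] by auto
          then show "norm (measure (\<kappa> j w) B) \<le> 1" by (simp add: prob_space.prob_le_1)
        qed
      qed (rule m)
    qed auto
    also have "\<dots> = (\<integral>\<^sup>+w. emeasure (\<kappa> j w) B \<partial>PW)"
    proof (rule nn_integral_cong)
      fix w assume "w \<in> space PW"
      then have "prob_space (\<kappa> j w)" "sets (\<kappa> j w) = sets Z" using kap_w[OF j] by auto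
      then show "ennreal (measure (\<kappa> j w) B) = emeasure (\<kappa> j w) B"
        by (simp add: finite_measure.emeasure_eq_measure prob_space.finite_measure)
    qed
    also have "\<dots> = emeasure (PW \<bind> \<kappa> j) B"
      by (rule emeasure_bind_prob_algebra[OF PWa kj B, symmetric])
    finally show "emeasure (P j) B = emeasure (PW \<bind> \<kappa> j) B" .
  qed
  have Gb: "\<And>j z. j \<in> {1..M} \<Longrightarrow> \<bar>Gf M K c j z\<bar> \<le> 3 * KC M K"
    using c_b by (intro Gf_bound) auto
  have Gm: "\<And>j. Gf M K c j \<in> borel_measurable Z" using c_meas by (intro PP.Gf_meas) auto
  define h where "h j w = (\<integral>z. Gf M K c j z \<partial>\<kappa> j w)" for j w
  have h_meas: "h j \<in> borel_measurable PW" if j: "j \<in> {1..M}" for j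
    unfolding h_def
    using measurable_compose[OF kap_sub[OF j] integral_measurable_subprob_algebra[OF Gm]] by (simp add: comp_def)
  have h_int: "integrable PW (h j)" if j: "j \<in> {1..M}" for j
  proof (rule PWp.integrable_const_bound[where B="3 * KC M K"])
    show "AE x in PW. norm (h j x) \<le> 3 * KC M K"
    proof (rule AE_I2)
      fix w assume "w \<in> space PW"
      then have ps: "prob_space (\<kappa> j w)" and se: "sets (\<kappa> j w) = sets Z" using kap_w[OF j] by auto
      have gm: "Gf M K c j \<in> borel_measurable (\<kappa> j w)"
        by (subst measurable_cong_sets[OF se refl]) (rule Gm)
      have sp: "space (\<kappa> j w) = space Z" by (rule sets_eq_imp_space_eq[OF se])
      show "norm (h j w) \<le> 3 * KC M K" unfolding h_def real_norm_def
        by (rule bounded_int_bound[OF ps gm]) (rule Gb[OF j])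
    qed
  qed (rule h_meas[OF j])
  have h_P: "(\<integral>w. h j w \<partial>PW) = (\<integral>z. Gf M K c j z \<partial>P j)" if j: "j \<in> {1..M}" for j
  proof -
    have mb: "AE w in PW. emeasure (\<kappa> j w) (space (\<kappa> j w)) \<le> ennreal 1"
    proof (rule AE_I2)
      fix w assume "w \<in> space PW"
      then have "prob_space (\<kappa> j w)" using kap_w[OF j] by auto
      then show "emeasure (\<kappa> j w) (space (\<kappa> j w)) \<le> ennreal 1" by (simp add: prob_space.emeasure_space_1)
    qed
    have "(\<integral>z. Gf M K c j z \<partial>(PW \<bind> \<kappa> j)) = (\<integral>w. (\<integral>z. Gf M K c j z \<partial>\<kappa> j w) \<partial>PW)"
      by (rule integral_bind[OF Gm _ kap_sub[OF j] PWp.finite_measure_axioms mb]) (rule Gb[OF j])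
    then show ?thesis unfolding bind_eq[OF j] h_def by simp
  qed
  define Fw where "Fw w = Ff M \<pi> K c (\<lambda>i. \<kappa> i w)" for w
  have Fw_eq: "Fw w = (\<Sum>j\<in>{1..M}. \<pi> j * h j w)" for w unfolding Fw_def Ff_def h_def ..
  have Fw_int: "integrable PW Fw" unfolding Fw_eq using h_int by auto
  have intFw: "(\<integral>w. Fw w \<partial>PW) = Ff M \<pi> K c P"
  proof -
    have "(\<integral>w. Fw w \<partial>PW) = (\<Sum>j\<in>{1..M}. \<pi> j * (\<integral>w. h j w \<partial>PW))"
      unfolding Fw_eq using h_int by (subst Bochner_Integration.integral_sum) auto
    also have "\<dots> = Ff M \<pi> K c P" unfolding Ff_def using h_P by simp
    finally show ?thesis .
  qed
  have FP: "Ff M \<pi> K c P = kmd_cross M \<pi> K Z P" unfolding c_def by (rule PP.F_eq)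
  have Fw_le: "Fw w \<le> kmd_cross M \<pi> K Z (\<lambda>i. \<kappa> i w)" if w: "w \<in> space N" for w
  proof -
    interpret Mw: mixsetup M \<pi> Z "\<lambda>i. \<kappa> i w" by (rule mixw[OF w])
    show ?thesis unfolding Fw_def by (rule Mw.F_le[OF kernel c_meas c_b])
  qed
  have kb: "\<bar>kmd M \<pi> K Z (\<lambda>i. \<kappa> i w)\<bar> \<le> (KC M K + \<bar>ind\<bar>) / D" if w: "w \<in> space N" for w
  proof -
    interpret Mw: mixsetup M \<pi> Z "\<lambda>i. \<kappa> i w" by (rule mixw[OF w])
    have "\<bar>kmd_cross M \<pi> K Z (\<lambda>i. \<kappa> i w) - ind\<bar> \<le> KC M K + \<bar>ind\<bar>"
      using Mw.cross_bounds[OF kernel] by linarith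
    then show ?thesis unfolding kmd_def ind_def[symmetric] D_def[symmetric] using Dpos
      by (simp add: abs_div divide_right_mono)
  qed
  have k_int: "integrable PW (\<lambda>w. kmd M \<pi> K Z (\<lambda>i. \<kappa> i w))"
  proof (rule PWp.integrable_const_bound[where B="(KC M K + \<bar>ind\<bar>) / D"])
    show "AE w in PW. norm (kmd M \<pi> K Z (\<lambda>i. \<kappa> i w)) \<le> (KC M K + \<bar>ind\<bar>) / D"
      by (rule AE_I2) (simp add: kb)
    show "(\<lambda>w. kmd M \<pi> K Z (\<lambda>i. \<kappa> i w)) \<in> borel_measurable PW"
      by (subst measurable_cong_sets[OF PW_sets refl]) (rule eta_meas)
  qed
  have "kmd M \<pi> K Z P = ((\<integral>w. Fw w \<partial>PW) - ind) / D"
    unfolding kmd_def ind_def[symmetric] D_def[symmetric] intFw FP ..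
  also have "\<dots> = (\<integral>w. (Fw w - ind) / D \<partial>PW)"
    using Fw_int PWp.prob_space by simp
  also have "\<dots> \<le> (\<integral>w. kmd M \<pi> K Z (\<lambda>i. \<kappa> i w) \<partial>PW)"
  proof (rule integral_mono)
    show "integrable PW (\<lambda>w. (Fw w - ind) / D)" using Fw_int by auto
    show "integrable PW (\<lambda>w. kmd M \<pi> K Z (\<lambda>i. \<kappa> i w))" by (rule k_int)
    fix w assume "w \<in> space PW"
    then have "Fw w \<le> kmd_cross M \<pi> K Z (\<lambda>i. \<kappa> i w)" using Fw_le by simp
    then show "(Fw w - ind) / D \<le> kmd M \<pi> K Z (\<lambda>i. \<kappa> i w)"
      unfolding kmd_def ind_def[symmetric] D_def[symmetric] using Dpos by (simp add: divide_right_mono)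
  qed
  finally show ?thesis unfolding PW_def P_def by simp
qed

end
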